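(* Let $\delta\in(0,1)$. With probability at least $1-\delta$ over the random draw of the training set $S=(\boldsymbol{x}_1,\dots,\boldsymbol{x}_n)$, every linear classifier $f(\boldsymbol{x})=\langle\boldsymbol{w},\boldsymbol{x}\rangle$ that maximizes the $L^2$-margin $\gamma_2(\boldsymbol{w}):=\min_{i\in[n]}\frac{y_i\langle\boldsymbol{w},\boldsymbol{x}_i\rangle}{\|\boldsymbol{w}\|_2}$ on $S$ satisfies $$\mathbb{E}_{\boldsymbol{x}\sim\mathcal{D}_X}\big[\mathbb{1}[y^*(\boldsymbol{x})f(\boldsymbol{x})\le0]\big]\le4\sqrt{\frac{kd}{n}}+3\sqrt{\frac{\log(2/\delta)}{2n}}.$$
   Context: $\mathcal{D}_X$ is the uniform distribution on $\{\pm1\}^d$. $k$ is a positive odd integer. The vector $\boldsymbol{w}^*\in\mathbb{R}^d$ has its first $k$ coordinates drawn uniformly from $\{\pm1\}^k$ and all other coordinates $0$; $y^*(\boldsymbol{x})=\mathrm{sign}(\langle\boldsymbol{w}^*,\boldsymbol{x}\rangle)$. The training inputs are i.i.d. from $\mathcal{D}_X$ and $y_i=y^*(\boldsymbol{x}_i)$. *)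

theory Defs
  imports "HOL-Analysis.Analysis" "HOL-Probability.Probability"
begin

text \<open>Vectors in R^d are represented as functions nat => real; only coordinates i < d matter.\<close>

definition ip :: "nat \<Rightarrow> (nat \<Rightarrow> real) \<Rightarrow> (nat \<Rightarrow> real) \<Rightarrow> real" where
  "ip d w x = (\<Sum>i<d. w i * x i)"

definition norm2 :: "nat \<Rightarrow> (nat \<Rightarrow> real) \<Rightarrow> real" where
  "norm2 d w = sqrt (\<Sum>i<d. (w i)^2)"

definition cube :: "nat \<Rightarrow> (nat \<Rightarrow> real) set" where
  "cube d = {x. (\<forall>i<d. x i \<in> {-1, 1}) \<and> (\<forall>i\<ge>d. x i = 0)}"

definition DX :: "nat \<Rightarrow> (nat \<Rightarrow> real) pmf" where
  "DX d = pmf_of_set (cube d)"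

definition ystar :: "nat \<Rightarrow> (nat \<Rightarrow> real) \<Rightarrow> (nat \<Rightarrow> real) \<Rightarrow> real" where
  "ystar d ws x = sgn (ip d ws x)"

definition sample :: "nat \<Rightarrow> nat \<Rightarrow> (nat \<Rightarrow> (nat \<Rightarrow> real)) pmf" where
  "sample d n = Pi_pmf {..<n} (\<lambda>_. 0) (\<lambda>_. DX d)"

definition margin2 :: "nat \<Rightarrow> nat \<Rightarrow> (nat \<Rightarrow> real) \<Rightarrow> (nat \<Rightarrow> (nat \<Rightarrow> real)) \<Rightarrow> (nat \<Rightarrow> real) \<Rightarrow> real" where
  "margin2 d n ws S w = (MIN i\<in>{..<n}. ystar d ws (S i) * ip d w (S i) / norm2 d w)"

definition max_margin :: "nat \<Rightarrow> nat \<Rightarrow> (nat \<Rightarrow> real) \<Rightarrow> (nat \<Rightarrow> (nat \<Rightarrow> real)) \<Rightarrow> (nat \<Rightarrow> real) \<Rightarrow> bool" where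
  "max_margin d n ws S w \<longleftrightarrow> norm2 d w \<noteq> 0 \<and>
     (\<forall>v. norm2 d v \<noteq> 0 \<longrightarrow> margin2 d n ws S v \<le> margin2 d n ws S w)"

definition test_err :: "nat \<Rightarrow> (nat \<Rightarrow> real) \<Rightarrow> (nat \<Rightarrow> real) \<Rightarrow> real" where
  "test_err d ws w = measure_pmf.prob (DX d) {x. ystar d ws x * ip d w x \<le> 0}"

end

theory Submission
  imports Defs
begin


definition bnd :: "'w set \<Rightarrow> ('w \<Rightarrow> real) \<Rightarrow> bool" where
  "bnd W f \<longleftrightarrow> (\<exists>M. \<forall>w\<in>W. \<bar>f w\<bar> \<le> M)"

lemma bnd_bdd_above: "bnd W f \<Longrightarrow> bdd_above (f ` W)"
  unfolding bnd_def bdd_above_def by (auto dest: abs_le_D1)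

lemma bnd_add: "bnd W f \<Longrightarrow> bnd W g \<Longrightarrow> bnd W (\<lambda>w. f w + g w)"
  unfolding bnd_def
proof (elim exE)
  fix M1 M2 assume "\<forall>w\<in>W. \<bar>f w\<bar> \<le> M1" "\<forall>w\<in>W. \<bar>g w\<bar> \<le> M2"
  then have "\<forall>w\<in>W. \<bar>f w + g w\<bar> \<le> M1 + M2" by (smt (verit))
  then show "\<exists>M. \<forall>w\<in>W. \<bar>f w + g w\<bar> \<le> M" by blast
qed

lemma bnd_const: "bnd W (\<lambda>w. c)"
  unfolding bnd_def by blast

lemma bnd_cmult: "bnd W f \<Longrightarrow> bnd W (\<lambda>w. c * f w)"
  unfolding bnd_def
proof (elim exE)
  fix M assume M: "\<forall>w\<in>W. \<bar>f w\<bar> \<le> M"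
  have "\<forall>w\<in>W. \<bar>c * f w\<bar> \<le> \<bar>c\<bar> * M"
    using M by (simp add: abs_mult mult_left_mono)
  then show "\<exists>M. \<forall>w\<in>W. \<bar>c * f w\<bar> \<le> M" by blast
qed

lemma bnd_uminus: "bnd W f \<Longrightarrow> bnd W (\<lambda>w. - f w)"
  unfolding bnd_def by simp

lemma bnd_diff: "bnd W f \<Longrightarrow> bnd W g \<Longrightarrow> bnd W (\<lambda>w. f w - g w)"
  using bnd_add[of W f "\<lambda>w. - g w"] bnd_uminus[of W g] by simp

lemma bnd_sum: "finite I \<Longrightarrow> (\<And>i. i \<in> I \<Longrightarrow> bnd W (f i)) \<Longrightarrow> bnd W (\<lambda>w. \<Sum>i\<in>I. f i w)"
proof (induction I rule: finite_induct)
  case empty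
  then show ?case by (simp add: bnd_const)
next
  case (insert x F)
  then show ?case by (simp add: bnd_add)
qed

lemma bnd_comp_lip:
  assumes "bnd W a" "\<And>z z'. \<bar>\<psi> z - \<psi> z'\<bar> \<le> L * \<bar>z - z'\<bar>"
  shows "bnd W (\<lambda>w. \<psi> (a w))"
proof -
  obtain M where M: "\<forall>w\<in>W. \<bar>a w\<bar> \<le> M" using assms(1) unfolding bnd_def by blast
  have "\<forall>w\<in>W. \<bar>\<psi> (a w)\<bar> \<le> \<bar>\<psi> 0\<bar> + \<bar>L\<bar> * M"
  proof
    fix w assume w: "w \<in> W"
    have "\<bar>\<psi> (a w) - \<psi> 0\<bar> \<le> L * \<bar>a w\<bar>" using assms(2)[of "a w" 0] by simp
    also have "\<dots> \<le> \<bar>L\<bar> * \<bar>a w\<bar>" by (simp add: mult_right_mono)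
    also have "\<dots> \<le> \<bar>L\<bar> * M" using M w by (simp add: mult_left_mono)
    finally show "\<bar>\<psi> (a w)\<bar> \<le> \<bar>\<psi> 0\<bar> + \<bar>L\<bar> * M" by linarith
  qed
  then show ?thesis unfolding bnd_def by blast
qed

lemma sup_le_sup_plus:
  assumes "W \<noteq> {}" "bnd W g" "\<And>w. w \<in> W \<Longrightarrow> f w \<le> g w + c"
  shows "(SUP w\<in>W. f w) \<le> (SUP w\<in>W. g w) + c"
proof (rule cSUP_least[OF assms(1)])
  fix w assume w: "w \<in> W"
  have "g w \<le> (SUP w\<in>W. g w)" by (rule cSUP_upper[OF w bnd_bdd_above[OF assms(2)]])
  then show "f w \<le> (SUP w\<in>W. g w) + c" using assms(3)[OF w] by linarith
qed

lemma sup_mono':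
  assumes "W \<noteq> {}" "bnd W g" "\<And>w. w \<in> W \<Longrightarrow> f w \<le> g w"
  shows "(SUP w\<in>W. f w) \<le> (SUP w\<in>W. g w)"
  using sup_le_sup_plus[OF assms(1,2), of f 0] assms(3) by simp

lemma sup_abs_diff:
  assumes "W \<noteq> {}" "bnd W f" "bnd W g" "\<And>w. w \<in> W \<Longrightarrow> \<bar>f w - g w\<bar> \<le> c"
  shows "\<bar>(SUP w\<in>W. f w) - (SUP w\<in>W. g w)\<bar> \<le> c"
proof -
  have "(SUP w\<in>W. f w) \<le> (SUP w\<in>W. g w) + c"
    by (rule sup_le_sup_plus[OF assms(1,3)]) (use assms(4) in fastforce)
  moreover have "(SUP w\<in>W. g w) \<le> (SUP w\<in>W. f w) + c"
    by (rule sup_le_sup_plus[OF assms(1,2)]) (use assms(4) in fastforce)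
  ultimately show ?thesis by linarith
qed

lemma sup_add_le:
  assumes "W \<noteq> {}" "bnd W f" "bnd W g"
  shows "(SUP w\<in>W. f w + g w) \<le> (SUP w\<in>W. f w) + (SUP w\<in>W. g w)"
proof (rule cSUP_least[OF assms(1)])
  fix w assume w: "w \<in> W"
  show "f w + g w \<le> (SUP w\<in>W. f w) + (SUP w\<in>W. g w)"
    using cSUP_upper[OF w bnd_bdd_above[OF assms(2)]] cSUP_upper[OF w bnd_bdd_above[OF assms(3)]]
    by linarith
qed

lemma sup_pair:
  assumes "W \<noteq> {}" "bnd W X" "bnd W Y" "\<And>w w'. w \<in> W \<Longrightarrow> w' \<in> W \<Longrightarrow> X w + Y w' \<le> R"
  shows "(SUP w\<in>W. X w) + (SUP w\<in>W. Y w) \<le> R"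
proof -
  have "\<And>w'. w' \<in> W \<Longrightarrow> (SUP w\<in>W. X w) \<le> R - Y w'"
  proof -
    fix w' assume "w' \<in> W"
    show "(SUP w\<in>W. X w) \<le> R - Y w'"
      by (rule cSUP_least[OF assms(1)]) (use assms(4) \<open>w' \<in> W\<close> in fastforce)
  qed
  then have "(SUP w\<in>W. Y w) \<le> R - (SUP w\<in>W. X w)"
    by (intro cSUP_least[OF assms(1)]) fastforce
  then show ?thesis by linarith
qed

lemma bnd_sup_abs:
  fixes f :: "'w \<Rightarrow> real"
  assumes "W \<noteq> {}" "\<And>w. w \<in> W \<Longrightarrow> \<bar>f w\<bar> \<le> M"
  shows "\<bar>(SUP w\<in>W. f w)\<bar> \<le> M"
proof -
  have b: "bnd W f" unfolding bnd_def using assms(2) by blast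
  obtain w0 where w0: "w0 \<in> W" using assms(1) by blast
  have "(SUP w\<in>W. f w) \<le> M" by (rule cSUP_least[OF assms(1)]) (use assms(2) in fastforce)
  moreover have "f w0 \<le> (SUP w\<in>W. f w)" by (rule cSUP_upper[OF w0 bnd_bdd_above[OF b]])
  moreover have "- M \<le> f w0" using assms(2)[OF w0] by linarith
  ultimately show ?thesis by linarith
qed

lemma sup_sum_le:
  assumes "W \<noteq> {}" "finite A" "\<And>a. a \<in> A \<Longrightarrow> bnd W (G a)"
  shows "(SUP w\<in>W. \<Sum>a\<in>A. G a w) \<le> (\<Sum>a\<in>A. SUP w\<in>W. G a w)"
proof (rule cSUP_least[OF assms(1)])
  fix w assume w: "w \<in> W"
  show "(\<Sum>a\<in>A. G a w) \<le> (\<Sum>a\<in>A. SUP w\<in>W. G a w)"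
    by (rule sum_mono) (rule cSUP_upper[OF w bnd_bdd_above[OF assms(3)]])
qed

lemma sum_PiE_dflt_insert:
  assumes "i \<notin> I"
  shows "(\<Sum>S\<in>PiE_dflt (insert i I) dd (\<lambda>_. A). g S) =
         (\<Sum>S\<in>PiE_dflt I dd (\<lambda>_. A). \<Sum>a\<in>A. g (S(i:=a)))"
proof -
  let ?f = "\<lambda>(S, a). S(i:=a)"
  have inj: "inj_on ?f (PiE_dflt I dd (\<lambda>_. A) \<times> A)"
  proof (rule inj_onI, clarsimp)
    fix S a S' a'
    assume h: "S \<in> PiE_dflt I dd (\<lambda>_. A)" "a \<in> A" "S' \<in> PiE_dflt I dd (\<lambda>_. A)" "a' \<in> A"
      "S(i := a) = S'(i := a')"
    then have "a = a'" by (metis fun_upd_same)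
    moreover have "S i = S' i" using h assms by (auto simp: PiE_dflt_def)
    ultimately show "S = S' \<and> a = a'" using h(5) by (metis fun_upd_triv fun_upd_upd)
  qed
  have img: "?f ` (PiE_dflt I dd (\<lambda>_. A) \<times> A) = PiE_dflt (insert i I) dd (\<lambda>_. A)"
  proof (intro equalityI subsetI)
    fix T assume "T \<in> ?f ` (PiE_dflt I dd (\<lambda>_. A) \<times> A)"
    then show "T \<in> PiE_dflt (insert i I) dd (\<lambda>_. A)" by (auto simp: PiE_dflt_def)
  next
    fix T assume T: "T \<in> PiE_dflt (insert i I) dd (\<lambda>_. A)"
    have "T = ?f (T(i:=dd), T i)" by simp
    moreover have "(T(i:=dd), T i) \<in> PiE_dflt I dd (\<lambda>_. A) \<times> A"
      using T assms by (auto simp: PiE_dflt_def)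
    ultimately show "T \<in> ?f ` (PiE_dflt I dd (\<lambda>_. A) \<times> A)" by (metis imageI)
  qed
  have "(\<Sum>S\<in>PiE_dflt (insert i I) dd (\<lambda>_. A). g S) = (\<Sum>p\<in>PiE_dflt I dd (\<lambda>_. A) \<times> A. g (?f p))"
    using sum.reindex[OF inj, of g] img by simp
  also have "\<dots> = (\<Sum>S\<in>PiE_dflt I dd (\<lambda>_. A). \<Sum>a\<in>A. g (S(i:=a)))"
    by (simp add: sum.cartesian_product case_prod_unfold)
  finally show ?thesis .
qed

lemma card_PiE_dflt_const:
  assumes "finite I" "finite A"
  shows "card (PiE_dflt I dd (\<lambda>_. A)) = card A ^ card I"
  using card_PiE_dflt[of I "\<lambda>_. A" dd] assms by simp



lemma hoeffding_finite:
  fixes X :: "'a \<Rightarrow> real"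
  assumes A: "finite A" "A \<noteq> {}" and S0: "(\<Sum>a\<in>A. X a) = 0"
    and rng: "\<And>a. a \<in> A \<Longrightarrow> m \<le> X a \<and> X a \<le> m + c" and l: "l > 0"
  shows "(\<Sum>a\<in>A. exp (l * X a)) \<le> card A * exp (l^2 * c^2 / 8)"
proof -
  let ?p = "pmf_of_set A"
  interpret interval_bounded_random_variable "measure_pmf ?p" X m "m + c"
  proof unfold_locales
    show "X \<in> borel_measurable (measure_pmf ?p)" by simp
    show "AE x in measure_pmf ?p. X x \<in> {m..m + c}"
      using A rng by (auto simp: AE_measure_pmf_iff)
  qed
  have E: "measure_pmf.expectation ?p X = 0" using A S0 integral_pmf_of_set[OF A(2,1), of X] by simp
  have "nn_integral (measure_pmf ?p) (\<lambda>x. exp (l * X x)) \<le> ennreal (exp (l\<^sup>2 * (m + c - m)\<^sup>2 / 8))"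
    by (rule Hoeffdings_lemma_nn_integral_0[OF l E])
  moreover have "nn_integral (measure_pmf ?p) (\<lambda>x. ennreal (exp (l * X x))) = ennreal ((\<Sum>a\<in>A. exp (l * X a)) / card A)"
  proof -
    have "integrable (measure_pmf ?p) (\<lambda>x. exp (l * X x))"
      using A by (intro integrable_measure_pmf_finite) auto
    then have "nn_integral (measure_pmf ?p) (\<lambda>x. ennreal (exp (l * X x))) = ennreal (integral\<^sup>L (measure_pmf ?p) (\<lambda>x. exp (l * X x)))"
      by (intro nn_integral_eq_integral) auto
    then show ?thesis using integral_pmf_of_set[OF A(2,1), of "\<lambda>x. exp (l * X x)"] by simp
  qed
  ultimately have "(\<Sum>a\<in>A. exp (l * X a)) / card A \<le> exp (l\<^sup>2 * c\<^sup>2 / 8)"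
    by simp
  moreover have "card A > 0" using A by (simp add: card_gt_0_iff)
  ultimately show ?thesis by (simp add: divide_le_eq mult.commute)
qed



lemma PiE_dflt_empty_set: "PiE_dflt {} dd B = {\<lambda>_. dd}"
  by (auto simp: PiE_dflt_def)

lemma mcdiarmid_mgf:
  fixes f :: "('i \<Rightarrow> 'a) \<Rightarrow> real" and c l :: real
  assumes I: "finite I" and A: "finite A" "A \<noteq> {}" and c: "c \<ge> 0" and l: "l > 0"
   and bd: "\<And>S i a. S \<in> PiE_dflt I dd (\<lambda>_. A) \<Longrightarrow> i \<in> I \<Longrightarrow> a \<in> A \<Longrightarrow> \<bar>f S - f (S(i:=a))\<bar> \<le> c"
  shows "(\<Sum>S\<in>PiE_dflt I dd (\<lambda>_. A). exp (l * (f S - (\<Sum>T\<in>PiE_dflt I dd (\<lambda>_. A). f T) / card (PiE_dflt I dd (\<lambda>_. A)))))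
          \<le> card (PiE_dflt I dd (\<lambda>_. A)) * exp (l^2 * c^2 * card I / 8)"
  using I bd
proof (induction I arbitrary: f rule: finite_induct)
  case empty
  then show ?case by (simp add: PiE_dflt_empty_set)
next
  case (insert i I)
  define P where "P = PiE_dflt I dd (\<lambda>_. A)"
  define P' where "P' = PiE_dflt (insert i I) dd (\<lambda>_. A)"
  define g where "g S = (\<Sum>a\<in>A. f (S(i:=a))) / card A" for S
  have cA: "card A > 0" using A by (simp add: card_gt_0_iff)
  have finP: "finite P" unfolding P_def using insert A by auto
  have cP: "card P > 0" unfolding P_def using insert A finP
    by (simp add: card_gt_0_iff P_def)
  have cP': "card P' = card P * card A"
    unfolding P_def P'_def using insert A by (simp add: card_PiE_dflt_const)
  have sumP': "(\<Sum>S\<in>P'. h S) = (\<Sum>S\<in>P. \<Sum>a\<in>A. h (S(i:=a)))" for h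
    unfolding P_def P'_def by (rule sum_PiE_dflt_insert[OF insert(2)])
  have memP': "S(i:=a) \<in> P'" if "S \<in> P" "a \<in> A" for S a
    using that unfolding P_def P'_def by (auto simp: PiE_dflt_def)
  have mu: "(\<Sum>T\<in>P'. f T) / card P' = (\<Sum>T\<in>P. g T) / card P"
  proof -
    have "(\<Sum>T\<in>P'. f T) = (\<Sum>T\<in>P. g T) * card A"
      unfolding sumP' g_def sum_distrib_right using cA by (intro sum.cong) auto
    then show ?thesis using cA cP by (simp add: cP' field_simps)
  qed
  define \<mu> where "\<mu> = (\<Sum>T\<in>P. g T) / card P"
  have gbd: "\<bar>g S - g (S(j:=b))\<bar> \<le> c" if S: "S \<in> P" and j: "j \<in> I" and b: "b \<in> A" for S j b
  proof -
    have ij: "i \<noteq> j" using insert(2) j by auto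
    have "g S - g (S(j:=b)) = (\<Sum>a\<in>A. f (S(i:=a)) - f ((S(i:=a))(j:=b))) / card A"
      unfolding g_def using ij by (simp add: sum_subtractf diff_divide_distrib fun_upd_twist)
    also have "\<bar>\<dots>\<bar> \<le> (\<Sum>a\<in>A. c) / card A"
    proof -
      have "\<bar>\<Sum>a\<in>A. f (S(i:=a)) - f ((S(i:=a))(j:=b))\<bar> \<le> (\<Sum>a\<in>A. \<bar>f (S(i:=a)) - f ((S(i:=a))(j:=b))\<bar>)"
        by (rule sum_abs)
      also have "\<dots> \<le> (\<Sum>a\<in>A. c)"
      proof (rule sum_mono)
        fix a assume a: "a \<in> A"
        show "\<bar>f (S(i:=a)) - f ((S(i:=a))(j:=b))\<bar> \<le> c"
          using insert(4)[OF memP'[OF S a, unfolded P'_def] insertI2[OF j] b] .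
      qed
      finally show ?thesis using cA by (simp add: pos_divide_le_eq mult.commute)
    qed
    also have "\<dots> = c" using cA by simp
    finally show ?thesis .
  qed
  have IH: "(\<Sum>S\<in>P. exp (l * (g S - \<mu>))) \<le> card P * exp (l^2 * c^2 * card I / 8)"
    using insert(3)[of g] gbd unfolding P_def \<mu>_def by blast
  have hoe: "(\<Sum>a\<in>A. exp (l * (f (S(i:=a)) - g S))) \<le> card A * exp (l^2 * c^2 / 8)" if S: "S \<in> P" for S
  proof -
    let ?F = "\<lambda>a. f (S(i:=a))"
    define m0 where "m0 = Min (?F ` A)"
    have "m0 \<in> ?F ` A" unfolding m0_def using A by (intro Min_in) auto
    then obtain a0 where a0: "a0 \<in> A" "m0 = ?F a0" by blast
    show ?thesis
    proof (rule hoeffding_finite[OF A _ _ l, of _ "m0 - g S"])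
      show "(\<Sum>a\<in>A. f (S(i := a)) - g S) = 0" unfolding g_def using cA by (simp add: sum_subtractf)
    next
      fix a assume a: "a \<in> A"
      have "m0 \<le> ?F a" unfolding m0_def using A a by (intro Min_le) auto
      moreover have "?F a \<le> m0 + c"
      proof -
        have "\<bar>f (S(i:=a0)) - f ((S(i:=a0))(i:=a))\<bar> \<le> c"
          using insert(4)[OF memP'[OF S a0(1), unfolded P'_def] insertI1 a] .
        then show ?thesis using a0 by simp
      qed
      ultimately show "m0 - g S \<le> f (S(i := a)) - g S \<and> f (S(i := a)) - g S \<le> m0 - g S + c"
        by simp
    qed
  qed
  have "(\<Sum>S\<in>P'. exp (l * (f S - \<mu>))) = (\<Sum>S\<in>P. exp (l * (g S - \<mu>)) * (\<Sum>a\<in>A. exp (l * (f (S(i:=a)) - g S))))"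
    unfolding sumP' by (simp add: sum_distrib_left exp_add[symmetric] algebra_simps)
  also have "\<dots> \<le> (\<Sum>S\<in>P. exp (l * (g S - \<mu>)) * (card A * exp (l^2 * c^2 / 8)))"
    by (intro sum_mono mult_left_mono hoe) auto
  also have "\<dots> = (\<Sum>S\<in>P. exp (l * (g S - \<mu>))) * (card A * exp (l^2 * c^2 / 8))"
    by (simp add: sum_distrib_right)
  also have "\<dots> \<le> (card P * exp (l^2 * c^2 * card I / 8)) * (card A * exp (l^2 * c^2 / 8))"
    by (intro mult_right_mono IH) auto
  also have "\<dots> = card P' * exp (l^2 * c^2 * card (insert i I) / 8)"
    using insert(1,2) by (simp add: cP' exp_add[symmetric] field_simps)
  finally show ?case unfolding P'_def[symmetric] mu \<mu>_def .
qed



lemma chernoff_count: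
  fixes f :: "'s \<Rightarrow> real"
  assumes P: "finite P" and l: "l > 0"
    and mgf: "(\<Sum>S\<in>P. exp (l * (f S - \<mu>))) \<le> K"
  shows "card {S\<in>P. f S - \<mu> \<ge> \<epsilon>} * exp (l * \<epsilon>) \<le> K"
proof -
  have "card {S\<in>P. f S - \<mu> \<ge> \<epsilon>} * exp (l * \<epsilon>) = (\<Sum>S\<in>{S\<in>P. f S - \<mu> \<ge> \<epsilon>}. exp (l * \<epsilon>))"
    by simp
  also have "\<dots> \<le> (\<Sum>S\<in>{S\<in>P. f S - \<mu> \<ge> \<epsilon>}. exp (l * (f S - \<mu>)))"
    using l by (intro sum_mono) (auto intro: mult_left_mono)
  also have "\<dots> \<le> (\<Sum>S\<in>P. exp (l * (f S - \<mu>)))"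
    using P by (intro sum_mono2) auto
  finally show ?thesis using mgf by linarith
qed

lemma one_coord:
  fixes W :: "'w set" and B a :: "'w \<Rightarrow> real" and \<psi> :: "real \<Rightarrow> real"
  assumes W: "W \<noteq> {}" and bB: "bnd W B" and ba: "bnd W a"
    and lip: "\<And>z z'. \<bar>\<psi> z - \<psi> z'\<bar> \<le> L * \<bar>z - z'\<bar>"
  shows "(\<Sum>s\<in>{-1,1::real}. SUP w\<in>W. B w + s * \<psi> (a w)) \<le> (\<Sum>s\<in>{-1,1::real}. SUP w\<in>W. B w + s * (L * a w))"
proof -
  have bpa: "bnd W (\<lambda>w. \<psi> (a w))" by (rule bnd_comp_lip[OF ba lip])
  have b1: "bnd W (\<lambda>w. B w + L * a w)" by (intro bnd_add bB bnd_cmult ba)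
  have b2: "bnd W (\<lambda>w. B w + - (L * a w))" by (intro bnd_add bB bnd_uminus bnd_cmult ba)
  have b3: "bnd W (\<lambda>w. B w + \<psi> (a w))" by (intro bnd_add bB bpa)
  have b4: "bnd W (\<lambda>w. B w + - \<psi> (a w))" by (intro bnd_add bB bnd_uminus bpa)
  define R where "R = (SUP w\<in>W. B w + L * a w) + (SUP w\<in>W. B w + - (L * a w))"
  have key: "(SUP w\<in>W. B w + \<psi> (a w)) + (SUP w\<in>W. B w + - \<psi> (a w)) \<le> R"
  proof (rule sup_pair[OF W b3 b4])
    fix w w' assume w: "w \<in> W" and w': "w' \<in> W"
    have u1: "B w + L * a w \<le> (SUP w\<in>W. B w + L * a w)" by (rule cSUP_upper[OF w bnd_bdd_above[OF b1]])
    have u2: "B w' + L * a w' \<le> (SUP w\<in>W. B w + L * a w)" by (rule cSUP_upper[OF w' bnd_bdd_above[OF b1]])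
    have u3: "B w + - (L * a w) \<le> (SUP w\<in>W. B w + - (L * a w))" by (rule cSUP_upper[OF w bnd_bdd_above[OF b2]])
    have u4: "B w' + - (L * a w') \<le> (SUP w\<in>W. B w + - (L * a w))" by (rule cSUP_upper[OF w' bnd_bdd_above[OF b2]])
    have "\<psi> (a w) - \<psi> (a w') \<le> L * \<bar>a w - a w'\<bar>" using lip[of "a w" "a w'"] by linarith
    then show "B w + \<psi> (a w) + (B w' + - \<psi> (a w')) \<le> R"
    proof (cases "a w \<ge> a w'")
      case True
      then have "L * \<bar>a w - a w'\<bar> = L * a w - L * a w'" by (simp add: right_diff_distrib)
      then show ?thesis using u1 u4 \<open>\<psi> (a w) - \<psi> (a w') \<le> L * \<bar>a w - a w'\<bar>\<close> unfolding R_def by linarith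
    next
      case False
      then have "L * \<bar>a w - a w'\<bar> = L * a w' - L * a w" by (simp add: right_diff_distrib)
      then show ?thesis using u2 u3 \<open>\<psi> (a w) - \<psi> (a w') \<le> L * \<bar>a w - a w'\<bar>\<close> unfolding R_def by linarith
    qed
  qed
  then show ?thesis unfolding R_def by (simp add: add.commute)
qed



abbreviation Sig :: "'i set \<Rightarrow> ('i \<Rightarrow> real) set" where
  "Sig I \<equiv> PiE_dflt I 0 (\<lambda>_. {-1, 1})"

lemma contraction:
  fixes W :: "'w set" and B :: "'w \<Rightarrow> real" and a :: "'i \<Rightarrow> 'w \<Rightarrow> real" and \<psi> :: "'i \<Rightarrow> real \<Rightarrow> real"
  assumes I: "finite I" and W: "W \<noteq> {}" and bB: "bnd W B" and ba: "\<And>i. i \<in> I \<Longrightarrow> bnd W (a i)"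
    and lip: "\<And>i z z'. i \<in> I \<Longrightarrow> \<bar>\<psi> i z - \<psi> i z'\<bar> \<le> L * \<bar>z - z'\<bar>"
  shows "(\<Sum>\<sigma>\<in>Sig I. SUP w\<in>W. B w + (\<Sum>i\<in>I. \<sigma> i * \<psi> i (a i w)))
       \<le> (\<Sum>\<sigma>\<in>Sig I. SUP w\<in>W. B w + L * (\<Sum>i\<in>I. \<sigma> i * a i w))"
  using I bB ba lip
proof (induction I arbitrary: B rule: finite_induct)
  case empty
  then show ?case by simp
next
  case (insert j I)
  have jI: "j \<notin> I" by fact
  have split: "(\<Sum>i\<in>insert j I. (\<sigma>(j:=s)) i * h i) = s * h j + (\<Sum>i\<in>I. \<sigma> i * h i)" for \<sigma> s and h :: "'i \<Rightarrow> real"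
  proof -
    have "(\<Sum>i\<in>I. (\<sigma>(j:=s)) i * h i) = (\<Sum>i\<in>I. \<sigma> i * h i)"
      using jI by (intro sum.cong) auto
    then show ?thesis using insert(1) jI by simp
  qed
  have bpsi: "bnd W (\<lambda>w. \<psi> i (a i w))" if "i \<in> insert j I" for i
    by (rule bnd_comp_lip[OF insert(5)[OF that] insert(6)[OF that]])
  have bsumpsi: "bnd W (\<lambda>w. \<Sum>i\<in>I. \<sigma> i * \<psi> i (a i w))" for \<sigma>
    using insert(1) by (intro bnd_sum bnd_cmult bpsi) auto
  have "(\<Sum>\<sigma>\<in>Sig (insert j I). SUP w\<in>W. B w + (\<Sum>i\<in>insert j I. \<sigma> i * \<psi> i (a i w)))
      = (\<Sum>\<sigma>\<in>Sig I. \<Sum>s\<in>{-1,1}. SUP w\<in>W. (B w + (\<Sum>i\<in>I. \<sigma> i * \<psi> i (a i w))) + s * \<psi> j (a j w))"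
    by (subst sum_PiE_dflt_insert[OF jI]) (intro sum.cong refl SUP_cong, unfold split, simp add: algebra_simps)
  also have "\<dots> \<le> (\<Sum>\<sigma>\<in>Sig I. \<Sum>s\<in>{-1,1}. SUP w\<in>W. (B w + (\<Sum>i\<in>I. \<sigma> i * \<psi> i (a i w))) + s * (L * a j w))"
  proof (rule sum_mono)
    fix \<sigma> assume "\<sigma> \<in> Sig I"
    show "(\<Sum>s\<in>{-1,1}. SUP w\<in>W. (B w + (\<Sum>i\<in>I. \<sigma> i * \<psi> i (a i w))) + s * \<psi> j (a j w))
        \<le> (\<Sum>s\<in>{-1,1}. SUP w\<in>W. (B w + (\<Sum>i\<in>I. \<sigma> i * \<psi> i (a i w))) + s * (L * a j w))"
      by (rule one_coord[OF W bnd_add[OF insert(4) bsumpsi] insert(5)[OF insertI1] insert(6)[OF insertI1]])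
  qed
  also have "\<dots> = (\<Sum>s\<in>{-1,1}. \<Sum>\<sigma>\<in>Sig I. SUP w\<in>W. (B w + s * (L * a j w)) + (\<Sum>i\<in>I. \<sigma> i * \<psi> i (a i w)))"
    by (subst sum.swap) (simp add: algebra_simps)
  also have "\<dots> \<le> (\<Sum>s\<in>{-1,1}. \<Sum>\<sigma>\<in>Sig I. SUP w\<in>W. (B w + s * (L * a j w)) + L * (\<Sum>i\<in>I. \<sigma> i * a i w))"
  proof (rule sum_mono)
    fix s :: real
    have bB': "bnd W (\<lambda>w. B w + s * (L * a j w))"
      by (intro bnd_add insert(4) bnd_cmult insert(5)) auto
    show "(\<Sum>\<sigma>\<in>Sig I. SUP w\<in>W. (B w + s * (L * a j w)) + (\<Sum>i\<in>I. \<sigma> i * \<psi> i (a i w)))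
        \<le> (\<Sum>\<sigma>\<in>Sig I. SUP w\<in>W. (B w + s * (L * a j w)) + L * (\<Sum>i\<in>I. \<sigma> i * a i w))"
      by (rule insert(3)[OF bB']) (use insert(5,6) in auto)
  qed
  also have "\<dots> = (\<Sum>\<sigma>\<in>Sig (insert j I). SUP w\<in>W. B w + L * (\<Sum>i\<in>insert j I. \<sigma> i * a i w))"
    by (subst sum_PiE_dflt_insert[OF jI], subst sum.swap) (intro sum.cong refl SUP_cong, unfold split, simp add: algebra_simps)
  finally show ?case .
qed



lemma sig_corr:
  assumes "i \<in> I" "i' \<in> I"
  shows "(\<Sum>\<sigma>\<in>Sig I. \<sigma> i * \<sigma> i') = (if i = i' then real (card (Sig I)) else 0)"
proof (cases "i = i'")
  case True
  have "(\<Sum>\<sigma>\<in>Sig I. \<sigma> i * \<sigma> i') = (\<Sum>\<sigma>\<in>Sig I. 1)"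
    using assms True by (intro sum.cong) (auto simp: PiE_dflt_def)
  then show ?thesis using True by simp
next
  case False
  let ?fl = "\<lambda>\<sigma>::'a \<Rightarrow> real. \<sigma>(i := - \<sigma> i)"
  have "(\<Sum>\<sigma>\<in>Sig I. \<sigma> i * \<sigma> i') = (\<Sum>\<sigma>\<in>Sig I. - (\<sigma> i * \<sigma> i'))"
  proof (rule sum.reindex_bij_witness[of _ ?fl ?fl])
    fix \<sigma> assume s: "\<sigma> \<in> Sig I"
    show "?fl (?fl \<sigma>) = \<sigma>" by simp
    show "?fl \<sigma> \<in> Sig I" using s assms by (auto simp: PiE_dflt_def)
    show "?fl (?fl \<sigma>) = \<sigma>" by simp
    show "?fl \<sigma> \<in> Sig I" using s assms by (auto simp: PiE_dflt_def)
    show "- (?fl \<sigma> i * ?fl \<sigma> i') = \<sigma> i * \<sigma> i'" using False by simp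
  qed
  then have "(\<Sum>\<sigma>\<in>Sig I. \<sigma> i * \<sigma> i') = 0" by (simp add: sum_negf)
  then show ?thesis using False by simp
qed

lemma sum_sq_sig:
  fixes c :: "'i \<Rightarrow> real"
  assumes I: "finite I"
  shows "(\<Sum>\<sigma>\<in>Sig I. (\<Sum>i\<in>I. \<sigma> i * c i)^2) = real (card (Sig I)) * (\<Sum>i\<in>I. (c i)^2)"
proof -
  have "(\<Sum>\<sigma>\<in>Sig I. (\<Sum>i\<in>I. \<sigma> i * c i)^2) = (\<Sum>\<sigma>\<in>Sig I. \<Sum>i\<in>I. \<Sum>i'\<in>I. (\<sigma> i * \<sigma> i') * (c i * c i'))"
    by (simp add: power2_eq_square sum_product algebra_simps)
  also have "\<dots> = (\<Sum>i\<in>I. \<Sum>i'\<in>I. (\<Sum>\<sigma>\<in>Sig I. \<sigma> i * \<sigma> i') * (c i * c i'))"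
    by (simp add: sum.swap[of _ "Sig I"] sum_distrib_right)
  also have "\<dots> = (\<Sum>i\<in>I. \<Sum>i'\<in>I. (if i = i' then real (card (Sig I)) * (c i * c i') else 0))"
    by (intro sum.cong refl) (simp add: sig_corr)
  also have "\<dots> = (\<Sum>i\<in>I. real (card (Sig I)) * (c i)^2)"
    using I by (simp add: sum.delta power2_eq_square)
  finally show ?thesis by (simp add: sum_distrib_left)
qed

lemma rad_linear:
  fixes z :: "'i \<Rightarrow> nat \<Rightarrow> real" and L :: real
  assumes I: "finite I" and L: "L \<ge> 0" and zb: "\<And>i j. \<bar>z i j\<bar> \<le> 1"
  shows "(\<Sum>\<sigma>\<in>Sig I. SUP w\<in>{w. norm2 d w \<le> 1}. 0 + L * (\<Sum>i\<in>I. \<sigma> i * (\<Sum>j<d. w j * z i j)))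
     \<le> real (card (Sig I)) * (L * sqrt (real (card I) * real d))"
proof -
  define Q where "Q \<sigma> = (\<Sum>j<d. (\<Sum>i\<in>I. \<sigma> i * z i j)^2)" for \<sigma> :: "'i \<Rightarrow> real"
  have Qnn: "Q \<sigma> \<ge> 0" for \<sigma> unfolding Q_def by (intro sum_nonneg) auto
  have Wne: "{w. norm2 d w \<le> (1::real)} \<noteq> {}"
  proof -
    have "(\<lambda>_. 0) \<in> {w. norm2 d w \<le> (1::real)}" by (simp add: norm2_def)
    then show ?thesis by blast
  qed
  have step1: "(SUP w\<in>{w. norm2 d w \<le> 1}. 0 + L * (\<Sum>i\<in>I. \<sigma> i * (\<Sum>j<d. w j * z i j))) \<le> L * sqrt (Q \<sigma>)" for \<sigma>
  proof (rule cSUP_least[OF Wne])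
    fix w assume w: "w \<in> {w. norm2 d w \<le> 1}"
    have "(\<Sum>i\<in>I. \<sigma> i * (\<Sum>j<d. w j * z i j)) = (\<Sum>j<d. w j * (\<Sum>i\<in>I. \<sigma> i * z i j))"
      by (simp add: sum_distrib_left sum.swap[of _ I] algebra_simps)
    also have "\<dots> \<le> (\<Sum>j<d. \<bar>w j\<bar> * \<bar>\<Sum>i\<in>I. \<sigma> i * z i j\<bar>)"
      by (intro sum_mono) (simp add: abs_mult[symmetric])
    also have "\<dots> \<le> L2_set w {..<d} * L2_set (\<lambda>j. \<Sum>i\<in>I. \<sigma> i * z i j) {..<d}"
      by (rule L2_set_mult_ineq)
    also have "\<dots> \<le> 1 * sqrt (Q \<sigma>)"
      using w by (intro mult_mono) (auto simp: L2_set_def norm2_def Q_def intro: sum_nonneg)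
    finally show "0 + L * (\<Sum>i\<in>I. \<sigma> i * (\<Sum>j<d. w j * z i j)) \<le> L * sqrt (Q \<sigma>)"
      using L by (simp add: mult_left_mono)
  qed
  have "(\<Sum>\<sigma>\<in>Sig I. SUP w\<in>{w. norm2 d w \<le> 1}. 0 + L * (\<Sum>i\<in>I. \<sigma> i * (\<Sum>j<d. w j * z i j)))
      \<le> (\<Sum>\<sigma>\<in>Sig I. L * sqrt (Q \<sigma>))"
    by (intro sum_mono step1)
  also have "\<dots> = L * (\<Sum>\<sigma>\<in>Sig I. \<bar>1\<bar> * \<bar>sqrt (Q \<sigma>)\<bar>)"
    by (simp add: sum_distrib_left Qnn)
  also have "\<dots> \<le> L * (L2_set (\<lambda>_. 1) (Sig I) * L2_set (\<lambda>\<sigma>. sqrt (Q \<sigma>)) (Sig I))"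
    using L by (intro mult_left_mono L2_set_mult_ineq)
  also have "L2_set (\<lambda>\<sigma>. sqrt (Q \<sigma>)) (Sig I) = sqrt (\<Sum>\<sigma>\<in>Sig I. Q \<sigma>)"
    unfolding L2_set_def by (intro arg_cong[where f = sqrt] sum.cong) (auto simp: Qnn)
  also have "(\<Sum>\<sigma>\<in>Sig I. Q \<sigma>) = real (card (Sig I)) * (\<Sum>j<d. \<Sum>i\<in>I. (z i j)^2)"
  proof -
    have "(\<Sum>\<sigma>\<in>Sig I. Q \<sigma>) = (\<Sum>j<d. \<Sum>\<sigma>\<in>Sig I. (\<Sum>i\<in>I. \<sigma> i * z i j)^2)"
      unfolding Q_def by (rule sum.swap)
    also have "\<dots> = (\<Sum>j<d. real (card (Sig I)) * (\<Sum>i\<in>I. (z i j)^2))"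
      by (intro sum.cong refl sum_sq_sig[OF I])
    finally show ?thesis by (simp add: sum_distrib_left)
  qed
  also have "\<dots> \<le> real (card (Sig I)) * (real d * real (card I))"
  proof -
    have "(\<Sum>j<d. \<Sum>i\<in>I. (z i j)^2) \<le> (\<Sum>j<d. \<Sum>i\<in>I. 1)"
    proof (intro sum_mono)
      fix j i
      have "\<bar>z i j\<bar>^2 \<le> 1^2" by (rule power_mono[OF zb]) simp
      then show "(z i j)^2 \<le> 1" by simp
    qed
    then show ?thesis by (intro mult_left_mono) auto
  qed
  finally have "(\<Sum>\<sigma>\<in>Sig I. SUP w\<in>{w. norm2 d w \<le> 1}. 0 + L * (\<Sum>i\<in>I. \<sigma> i * (\<Sum>j<d. w j * z i j)))
      \<le> L * (L2_set (\<lambda>_. 1) (Sig I) * sqrt (real (card (Sig I)) * (real d * real (card I))))"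
    using L by (simp add: mult_left_mono mult_right_mono)
  also have "L2_set (\<lambda>_. 1) (Sig I) = sqrt (real (card (Sig I)))"
    by (simp add: L2_set_def)
  also have "L * (sqrt (real (card (Sig I))) * sqrt (real (card (Sig I)) * (real d * real (card I))))
     = real (card (Sig I)) * (L * sqrt (real (card I) * real d))"
    by (simp add: real_sqrt_mult algebra_simps)
  finally show ?thesis .
qed



lemma sig_neg_sum:
  "(\<Sum>\<sigma>\<in>Sig I. F (\<lambda>i. - \<sigma> i)) = (\<Sum>\<sigma>\<in>Sig I. F \<sigma>)"
proof (rule sum.reindex_bij_witness[of _ "\<lambda>\<sigma> i. - \<sigma> i" "\<lambda>\<sigma> i. - \<sigma> i"])
  fix \<sigma> assume s: "\<sigma> \<in> Sig I"
  show "(\<lambda>i. - (- \<sigma> i)) = \<sigma>" by simp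
  show "(\<lambda>i. - \<sigma> i) \<in> Sig I" using s by (auto simp: PiE_dflt_def)
  show "(\<lambda>i. - (- \<sigma> i)) = \<sigma>" by simp
  show "(\<lambda>i. - \<sigma> i) \<in> Sig I" using s by (auto simp: PiE_dflt_def)
  show "F (\<lambda>i. - \<sigma> i) = F (\<lambda>i. - \<sigma> i)" by simp
qed

lemma swap_sum:
  fixes D :: "('i \<Rightarrow> 'a) \<Rightarrow> ('i \<Rightarrow> 'a) \<Rightarrow> real" and dd :: 'a and A :: "'a set"
  assumes s: "\<sigma> \<in> Sig I"
  defines "P \<equiv> PiE_dflt I dd (\<lambda>_. A)"
  shows "(\<Sum>S\<in>P. \<Sum>T\<in>P. D S T) =
    (\<Sum>S\<in>P. \<Sum>T\<in>P. D (\<lambda>i. if \<sigma> i = 1 then S i else T i) (\<lambda>i. if \<sigma> i = 1 then T i else S i))"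
proof -
  let ?sw = "\<lambda>(S, T). ((\<lambda>i. if \<sigma> i = 1 then S i else T i), (\<lambda>i. if \<sigma> i = 1 then T i else S i))"
  have inv: "?sw (?sw p) = p" for p by (cases p) (auto simp: fun_eq_iff)
  have "(\<Sum>p\<in>P \<times> P. case_prod D p) = (\<Sum>p\<in>P \<times> P. case_prod D (?sw p))"
  proof (rule sum.reindex_bij_witness[of _ ?sw ?sw])
    fix p assume p: "p \<in> P \<times> P"
    show "?sw (?sw p) = p" by (cases p) (auto simp: fun_eq_iff)
    show "?sw p \<in> P \<times> P" using p by (auto simp: P_def PiE_dflt_def case_prod_unfold)
    show "?sw (?sw p) = p" by (cases p) (auto simp: fun_eq_iff)
    show "?sw p \<in> P \<times> P" using p by (auto simp: P_def PiE_dflt_def case_prod_unfold)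
    show "case_prod D (?sw (?sw p)) = case_prod D p" using inv[of p] by metis
  qed
  then show ?thesis by (simp add: sum.cartesian_product case_prod_unfold)
qed



lemma symmetrization:
  fixes h :: "'w \<Rightarrow> 'a \<Rightarrow> real" and I :: "'i set" and dd :: 'a and A :: "'a set" and W :: "'w set"
  assumes I: "finite I" and A: "finite A" "A \<noteq> {}" and W: "W \<noteq> {}"
    and hb: "\<And>w x. w \<in> W \<Longrightarrow> \<bar>h w x\<bar> \<le> M"
  defines "P \<equiv> PiE_dflt I dd (\<lambda>_. A)"
  shows "(\<Sum>S\<in>P. SUP w\<in>W. (\<Sum>T\<in>P. \<Sum>i\<in>I. h w (T i)) / card P - (\<Sum>i\<in>I. h w (S i)))
        \<le> 2 * (\<Sum>S\<in>P. \<Sum>\<sigma>\<in>Sig I. SUP w\<in>W. \<Sum>i\<in>I. \<sigma> i * h w (S i)) / card (Sig I)"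
proof -
  have finP: "finite P" unfolding P_def using I A by auto
  have cP: "card P > 0" using finP A unfolding P_def by (auto simp: card_gt_0_iff)
  have finS: "finite (Sig I)" using I by auto
  have cS: "card (Sig I) > 0" using finS by (auto simp: card_gt_0_iff)
  have bh: "bnd W (\<lambda>w. h w x)" for x unfolding bnd_def using hb by blast
  define D where "D S T = (SUP w\<in>W. \<Sum>i\<in>I. h w (T i) - h w (S i))" for S T :: "'i \<Rightarrow> 'a"
  define Ds where "Ds \<sigma> S T = (SUP w\<in>W. \<Sum>i\<in>I. \<sigma> i * (h w (T i) - h w (S i)))" for \<sigma> :: "'i \<Rightarrow> real" and S T :: "'i \<Rightarrow> 'a"
  define R where "R \<sigma> S = (SUP w\<in>W. \<Sum>i\<in>I. \<sigma> i * h w (S i))" for \<sigma> :: "'i \<Rightarrow> real" and S :: "'i \<Rightarrow> 'a"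
  have bD: "bnd W (\<lambda>w. \<Sum>i\<in>I. h w (T i) - h w (S i))" for S T
    using I by (intro bnd_sum bnd_diff bh)
  have step1: "(SUP w\<in>W. (\<Sum>T\<in>P. \<Sum>i\<in>I. h w (T i)) / card P - (\<Sum>i\<in>I. h w (S i))) \<le> (\<Sum>T\<in>P. D S T) / card P" for S
  proof (rule cSUP_least[OF W])
    fix w assume w: "w \<in> W"
    have "(\<Sum>T\<in>P. \<Sum>i\<in>I. h w (T i)) / card P - (\<Sum>i\<in>I. h w (S i))
        = (\<Sum>T\<in>P. \<Sum>i\<in>I. h w (T i) - h w (S i)) / card P"
      using cP by (simp add: sum_subtractf field_simps)
    also have "\<dots> \<le> (\<Sum>T\<in>P. D S T) / card P"
      unfolding D_def by (intro divide_right_mono sum_mono cSUP_upper[OF w bnd_bdd_above[OF bD]]) auto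
    finally show "(\<Sum>T\<in>P. \<Sum>i\<in>I. h w (T i)) / card P - (\<Sum>i\<in>I. h w (S i)) \<le> (\<Sum>T\<in>P. D S T) / card P" .
  qed
  have step2: "(\<Sum>S\<in>P. \<Sum>T\<in>P. D S T) = (\<Sum>S\<in>P. \<Sum>T\<in>P. Ds \<sigma> S T)" if s: "\<sigma> \<in> Sig I" for \<sigma>
  proof -
    have "(\<Sum>S\<in>P. \<Sum>T\<in>P. D S T) =
      (\<Sum>S\<in>P. \<Sum>T\<in>P. D (\<lambda>i. if \<sigma> i = 1 then S i else T i) (\<lambda>i. if \<sigma> i = 1 then T i else S i))"
      unfolding P_def by (rule swap_sum[OF s])
    also have "\<dots> = (\<Sum>S\<in>P. \<Sum>T\<in>P. Ds \<sigma> S T)"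
      unfolding D_def Ds_def
    proof (intro sum.cong refl SUP_cong)
      fix S T w i assume "i \<in> I"
      then have "\<sigma> i = 1 \<or> \<sigma> i = -1" using s by (auto simp: PiE_dflt_def)
      then show "h w (if \<sigma> i = 1 then T i else S i) - h w (if \<sigma> i = 1 then S i else T i)
          = \<sigma> i * (h w (T i) - h w (S i))" by auto
    qed
    finally show ?thesis .
  qed
  have step3: "Ds \<sigma> S T \<le> R \<sigma> T + R (\<lambda>i. - \<sigma> i) S" for \<sigma> S T
  proof -
    have "Ds \<sigma> S T = (SUP w\<in>W. (\<Sum>i\<in>I. \<sigma> i * h w (T i)) + (\<Sum>i\<in>I. - \<sigma> i * h w (S i)))"
      unfolding Ds_def by (intro SUP_cong refl) (simp add: sum.distrib[symmetric] algebra_simps)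
    also have "\<dots> \<le> R \<sigma> T + R (\<lambda>i. - \<sigma> i) S"
      unfolding R_def using I by (intro sup_add_le W bnd_sum bnd_cmult bh)
    finally show ?thesis .
  qed
  define X where "X = (\<Sum>\<sigma>\<in>Sig I. \<Sum>S\<in>P. R \<sigma> S)"
  have "(\<Sum>S\<in>P. SUP w\<in>W. (\<Sum>T\<in>P. \<Sum>i\<in>I. h w (T i)) / card P - (\<Sum>i\<in>I. h w (S i)))
      \<le> (\<Sum>S\<in>P. (\<Sum>T\<in>P. D S T) / card P)"
    by (intro sum_mono step1)
  also have "\<dots> = (\<Sum>S\<in>P. \<Sum>T\<in>P. D S T) / card P" by (simp add: sum_divide_distrib)
  also have "(\<Sum>S\<in>P. \<Sum>T\<in>P. D S T) = (\<Sum>\<sigma>\<in>Sig I. \<Sum>S\<in>P. \<Sum>T\<in>P. Ds \<sigma> S T) / card (Sig I)"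
  proof -
    have "(\<Sum>\<sigma>\<in>Sig I. \<Sum>S\<in>P. \<Sum>T\<in>P. Ds \<sigma> S T) = (\<Sum>\<sigma>\<in>Sig I. \<Sum>S\<in>P. \<Sum>T\<in>P. D S T)"
      by (intro sum.cong refl step2[symmetric]) auto
    then show ?thesis using cS by simp
  qed
  also have "(\<Sum>\<sigma>\<in>Sig I. \<Sum>S\<in>P. \<Sum>T\<in>P. Ds \<sigma> S T) \<le> (\<Sum>\<sigma>\<in>Sig I. \<Sum>S\<in>P. \<Sum>T\<in>P. R \<sigma> T + R (\<lambda>i. - \<sigma> i) S)"
    by (intro sum_mono step3)
  also have "\<dots> = card P * X + card P * X"
  proof -
    have in1: "(\<Sum>S\<in>P. \<Sum>T\<in>P. a T + b S) = card P * (\<Sum>T\<in>P. a T) + card P * (\<Sum>S\<in>P. b S)"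
      for a b :: "('i \<Rightarrow> 'a) \<Rightarrow> real"
      by (simp add: sum.distrib sum_distrib_left)
    have "(\<Sum>\<sigma>\<in>Sig I. \<Sum>S\<in>P. \<Sum>T\<in>P. R \<sigma> T + R (\<lambda>i. - \<sigma> i) S)
       = (\<Sum>\<sigma>\<in>Sig I. card P * (\<Sum>T\<in>P. R \<sigma> T) + card P * (\<Sum>S\<in>P. R (\<lambda>i. - \<sigma> i) S))"
      by (intro sum.cong refl in1)
    also have "\<dots> = card P * X + card P * (\<Sum>\<sigma>\<in>Sig I. \<Sum>S\<in>P. R (\<lambda>i. - \<sigma> i) S)"
      unfolding X_def by (simp add: sum.distrib sum_distrib_left)
    also have "(\<Sum>\<sigma>\<in>Sig I. \<Sum>S\<in>P. R (\<lambda>i. - \<sigma> i) S) = X"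
      unfolding X_def by (rule sig_neg_sum[where F = "\<lambda>\<sigma>. \<Sum>S\<in>P. R \<sigma> S"])
    finally show ?thesis .
  qed
  finally have "(\<Sum>S\<in>P. SUP w\<in>W. (\<Sum>T\<in>P. \<Sum>i\<in>I. h w (T i)) / card P - (\<Sum>i\<in>I. h w (S i)))
      \<le> (card P * X + card P * X) / card (Sig I) / card P"
    using cP cS by (simp add: divide_right_mono)
  also have "\<dots> = 2 * X / card (Sig I)" using cP by (simp add: field_simps)
  also have "X = (\<Sum>S\<in>P. \<Sum>\<sigma>\<in>Sig I. SUP w\<in>W. \<Sum>i\<in>I. \<sigma> i * h w (S i))"
    unfolding X_def R_def by (rule sum.swap)
  finally show ?thesis .
qed



lemma cube_eq: "cube d = PiE_dflt {..<d} 0 (\<lambda>_. {-1, 1})"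
  unfolding cube_def PiE_dflt_def lessThan_iff
  by (rule Collect_cong) (meson not_le)

lemma cube_finite: "finite (cube d)"
  unfolding cube_eq by auto

lemma cube_ne: "cube d \<noteq> {}"
  unfolding cube_eq by simp

definition PS :: "nat \<Rightarrow> nat \<Rightarrow> (nat \<Rightarrow> (nat \<Rightarrow> real)) set" where
  "PS d n = PiE_dflt {..<n} (\<lambda>_. 0) (\<lambda>_. cube d)"

lemma PS_finite: "finite (PS d n)"
  unfolding PS_def using cube_finite by auto

lemma PS_ne: "PS d n \<noteq> {}"
  unfolding PS_def using cube_ne by simp

lemma sample_eq: "sample d n = pmf_of_set (PS d n)"
  unfolding sample_def DX_def PS_def
  using Pi_pmf_of_set[of "{..<n}" "\<lambda>_. cube d" "\<lambda>_. 0"] cube_finite cube_ne by simp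

definition phi :: "nat \<Rightarrow> real \<Rightarrow> real" where
  "phi k z = min 1 (max 0 (1 - sqrt (real k) * z))"

lemma phi_lip: "\<bar>phi k z - phi k z'\<bar> \<le> sqrt (real k) * \<bar>z - z'\<bar>"
proof -
  have "\<bar>min 1 (max 0 (1 - u)) - min 1 (max 0 (1 - u'))\<bar> \<le> \<bar>u - u'\<bar>" for u u' :: real
    by (cases "u \<le> 0"; cases "u \<le> 1"; cases "u' \<le> 0"; cases "u' \<le> 1") (simp_all add: min_def max_def abs_if)
  from this[of "sqrt (real k) * z" "sqrt (real k) * z'"]
  show ?thesis unfolding phi_def by (simp add: right_diff_distrib[symmetric] abs_mult)
qed

lemma phi_range: "0 \<le> phi k z" "phi k z \<le> 1"
  unfolding phi_def by auto

lemma phi_abs: "\<bar>phi k z\<bar> \<le> 1"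
  using phi_range[of k z] by simp

lemma phi_nonpos: "z \<le> 0 \<Longrightarrow> phi k z = 1"
proof -
  assume "z \<le> 0"
  then have "sqrt (real k) * z \<le> 0" by (simp add: mult_nonneg_nonpos)
  then show ?thesis unfolding phi_def by simp
qed

lemma phi_large: "sqrt (real k) * z \<ge> 1 \<Longrightarrow> phi k z = 0"
  unfolding phi_def by simp

definition hh :: "nat \<Rightarrow> nat \<Rightarrow> (nat \<Rightarrow> real) \<Rightarrow> (nat \<Rightarrow> real) \<Rightarrow> (nat \<Rightarrow> real) \<Rightarrow> real" where
  "hh d k ws w x = phi k (ystar d ws x * ip d w x)"

definition Wb :: "nat \<Rightarrow> (nat \<Rightarrow> real) set" where
  "Wb d = {w. norm2 d w \<le> 1}"

lemma Wb_ne: "Wb d \<noteq> {}"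
proof -
  have "(\<lambda>_. 0) \<in> Wb d" by (simp add: Wb_def norm2_def)
  then show ?thesis by blast
qed

definition GG :: "nat \<Rightarrow> nat \<Rightarrow> nat \<Rightarrow> (nat \<Rightarrow> real) \<Rightarrow> (nat \<Rightarrow> (nat \<Rightarrow> real)) \<Rightarrow> real" where
  "GG d k n ws S = (SUP w\<in>Wb d. (\<Sum>T\<in>PS d n. \<Sum>i\<in>{..<n}. hh d k ws w (T i)) / card (PS d n) - (\<Sum>i\<in>{..<n}. hh d k ws w (S i)))"

lemma hh_abs: "\<bar>hh d k ws w x\<bar> \<le> 1"
  unfolding hh_def by (rule phi_abs)

lemma bnd_hh: "bnd W (\<lambda>w. hh d k ws w x)"
  unfolding bnd_def using hh_abs by blast

lemma marginal:
  fixes g :: "'a \<Rightarrow> real"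
  assumes I: "finite I" and i: "i \<in> I" and A: "finite A"
  shows "(\<Sum>T\<in>PiE_dflt I dd (\<lambda>_. A). g (T i)) * card A = card (PiE_dflt I dd (\<lambda>_. A)) * (\<Sum>a\<in>A. g a)"
proof -
  have II: "I = insert i (I - {i})" using i by auto
  have "(\<Sum>T\<in>PiE_dflt I dd (\<lambda>_. A). g (T i)) = (\<Sum>T\<in>PiE_dflt (I - {i}) dd (\<lambda>_. A). \<Sum>a\<in>A. g a)"
    by (subst II, subst sum_PiE_dflt_insert) auto
  also have "\<dots> = card (PiE_dflt (I - {i}) dd (\<lambda>_. A)) * (\<Sum>a\<in>A. g a)" by simp
  finally have 1: "(\<Sum>T\<in>PiE_dflt I dd (\<lambda>_. A). g (T i)) = card (PiE_dflt (I - {i}) dd (\<lambda>_. A)) * (\<Sum>a\<in>A. g a)" .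
  have "card (PiE_dflt I dd (\<lambda>_. A)) = card A ^ card I" using I A by (rule card_PiE_dflt_const)
  also have "card I = Suc (card (I - {i}))" using I i card_Suc_Diff1 by metis
  also have "card A ^ Suc (card (I - {i})) = card (PiE_dflt (I - {i}) dd (\<lambda>_. A)) * card A"
    using I A by (simp add: card_PiE_dflt_const)
  finally show ?thesis using 1 by simp
qed



lemma PS_coord_abs:
  assumes "S \<in> PS d n" shows "\<bar>S i j\<bar> \<le> 1"
proof (cases "i < n")
  case True
  then have "S i \<in> cube d" using assms by (auto simp: PS_def PiE_dflt_def)
  then have "j < d \<Longrightarrow> S i j = -1 \<or> S i j = 1" "\<not> j < d \<Longrightarrow> S i j = 0" by (auto simp: cube_def)
  then show ?thesis by (cases "j < d") auto
next
  case False
  then have "S i = (\<lambda>_. 0)" using assms by (auto simp: PS_def PiE_dflt_def)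
  then show ?thesis by simp
qed

lemma ystar_abs: "\<bar>ystar d ws x\<bar> \<le> 1"
  unfolding ystar_def by (simp add: sgn_real_def)

lemma EG_bound:
  shows "(\<Sum>S\<in>PS d n. GG d k n ws S) \<le> 2 * real (card (PS d n)) * (sqrt (real k) * sqrt (real n * real d))"
proof -
  let ?Sg = "Sig {..<n}"
  have cS: "card ?Sg > 0" by (auto simp: card_gt_0_iff)
  have sym: "(\<Sum>S\<in>PS d n. GG d k n ws S) \<le> 2 * (\<Sum>S\<in>PS d n. \<Sum>\<sigma>\<in>?Sg. SUP w\<in>Wb d. \<Sum>i\<in>{..<n}. \<sigma> i * hh d k ws w (S i)) / card ?Sg"
    unfolding GG_def PS_def
    by (rule symmetrization[OF _ cube_finite cube_ne Wb_ne hh_abs]) auto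
  have per: "(\<Sum>\<sigma>\<in>?Sg. SUP w\<in>Wb d. \<Sum>i\<in>{..<n}. \<sigma> i * hh d k ws w (S i))
        \<le> real (card ?Sg) * (sqrt (real k) * sqrt (real n * real d))" if S: "S \<in> PS d n" for S
  proof -
    define z where "z i j = ystar d ws (S i) * S i j" for i j
    define a where "a i w = (\<Sum>j<d. w j * z i j)" for i and w :: "nat \<Rightarrow> real"
    have zb: "\<bar>z i j\<bar> \<le> 1" for i j
      unfolding z_def abs_mult using ystar_abs PS_coord_abs[OF S] by (simp add: mult_le_one)
    have ha: "hh d k ws w (S i) = phi k (a i w)" for w i
      unfolding hh_def a_def z_def ip_def by (simp add: sum_distrib_left algebra_simps)
    have ba: "bnd (Wb d) (a i)" for i
    proof -
      have "\<bar>a i w\<bar> \<le> L2_set (z i) {..<d}" if w: "w \<in> Wb d" for w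
      proof -
        have "\<bar>a i w\<bar> \<le> (\<Sum>j<d. \<bar>w j\<bar> * \<bar>z i j\<bar>)"
          unfolding a_def by (rule order.trans[OF sum_abs]) (simp add: abs_mult)
        also have "\<dots> \<le> L2_set w {..<d} * L2_set (z i) {..<d}" by (rule L2_set_mult_ineq)
        also have "\<dots> \<le> 1 * L2_set (z i) {..<d}"
          using w by (intro mult_right_mono) (auto simp: Wb_def norm2_def L2_set_def intro: sum_nonneg)
        finally show ?thesis by simp
      qed
      then show ?thesis unfolding bnd_def by blast
    qed
    have "(\<Sum>\<sigma>\<in>?Sg. SUP w\<in>Wb d. \<Sum>i\<in>{..<n}. \<sigma> i * hh d k ws w (S i))
        = (\<Sum>\<sigma>\<in>?Sg. SUP w\<in>Wb d. 0 + (\<Sum>i\<in>{..<n}. \<sigma> i * phi k (a i w)))"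
      by (simp add: ha)
    also have "\<dots> \<le> (\<Sum>\<sigma>\<in>?Sg. SUP w\<in>Wb d. 0 + sqrt (real k) * (\<Sum>i\<in>{..<n}. \<sigma> i * a i w))"
      by (rule contraction[OF _ Wb_ne bnd_const ba phi_lip]) auto
    also have "\<dots> \<le> real (card ?Sg) * (sqrt (real k) * sqrt (real (card {..<n}) * real d))"
      unfolding a_def Wb_def by (rule rad_linear[OF _ _ zb]) auto
    finally show ?thesis by simp
  qed
  have "(\<Sum>S\<in>PS d n. \<Sum>\<sigma>\<in>?Sg. SUP w\<in>Wb d. \<Sum>i\<in>{..<n}. \<sigma> i * hh d k ws w (S i))
      \<le> (\<Sum>S\<in>PS d n. real (card ?Sg) * (sqrt (real k) * sqrt (real n * real d)))"
    by (intro sum_mono per)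
  also have "\<dots> = real (card (PS d n)) * real (card ?Sg) * (sqrt (real k) * sqrt (real n * real d))"
    by simp
  finally have "2 * (\<Sum>S\<in>PS d n. \<Sum>\<sigma>\<in>?Sg. SUP w\<in>Wb d. \<Sum>i\<in>{..<n}. \<sigma> i * hh d k ws w (S i)) / card ?Sg
      \<le> 2 * (real (card (PS d n)) * real (card ?Sg) * (sqrt (real k) * sqrt (real n * real d))) / card ?Sg"
    using cS by (intro divide_right_mono mult_left_mono) auto
  also have "\<dots> = 2 * real (card (PS d n)) * (sqrt (real k) * sqrt (real n * real d))"
    using cS by simp
  finally show ?thesis using sym by linarith
qed



lemma bnd_div: "bnd W f \<Longrightarrow> bnd W (\<lambda>w. f w / c)"
  using bnd_cmult[of W f "inverse c"] by (simp add: divide_inverse mult.commute)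

lemma GG_bd:
  assumes S: "S \<in> PS d n" and i: "i \<in> {..<n}" and a: "a \<in> cube d"
  shows "\<bar>GG d k n ws S - GG d k n ws (S(i:=a))\<bar> \<le> 1"
proof -
  define K where "K w = (\<Sum>T\<in>PS d n. \<Sum>j\<in>{..<n}. hh d k ws w (T j)) / real (card (PS d n))" for w
  have bK: "bnd (Wb d) (\<lambda>w. K w - (\<Sum>j\<in>{..<n}. hh d k ws w (S' j)))" for S' :: "nat \<Rightarrow> nat \<Rightarrow> real"
    unfolding K_def by (intro bnd_diff bnd_div bnd_sum bnd_hh) (auto simp: PS_finite)
  have G: "GG d k n ws S' = (SUP w\<in>Wb d. K w - (\<Sum>j\<in>{..<n}. hh d k ws w (S' j)))" for S'
    unfolding GG_def K_def ..
  show ?thesis unfolding G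
  proof (rule sup_abs_diff[OF Wb_ne bK bK])
    fix w
    have "(\<Sum>j\<in>{..<n}. hh d k ws w ((S(i:=a)) j)) - (\<Sum>j\<in>{..<n}. hh d k ws w (S j))
        = (\<Sum>j\<in>{..<n}. hh d k ws w ((S(i:=a)) j) - hh d k ws w (S j))"
      by (simp only: sum_subtractf)
    also have "\<dots> = (\<Sum>j\<in>{..<n}. if j = i then hh d k ws w a - hh d k ws w (S i) else 0)"
      by (rule sum.cong) auto
    also have "\<dots> = hh d k ws w a - hh d k ws w (S i)" using i by simp
    finally have eq: "(\<Sum>j\<in>{..<n}. hh d k ws w ((S(i:=a)) j)) - (\<Sum>j\<in>{..<n}. hh d k ws w (S j))
        = hh d k ws w a - hh d k ws w (S i)" .
    have r1: "0 \<le> hh d k ws w a" "hh d k ws w a \<le> 1" "0 \<le> hh d k ws w (S i)" "hh d k ws w (S i) \<le> 1"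
      unfolding hh_def by (rule phi_range)+
    show "\<bar>K w - (\<Sum>j\<in>{..<n}. hh d k ws w (S j)) - (K w - (\<Sum>j\<in>{..<n}. hh d k ws w ((S(i:=a)) j)))\<bar> \<le> 1"
      using eq r1 by linarith
  qed
qed

lemma GG_tail:
  fixes d k :: nat and ws :: "nat \<Rightarrow> real"
  assumes n: "n \<ge> 1" and t: "t > 0"
  defines "\<mu> \<equiv> (\<Sum>T\<in>PS d n. GG d k n ws T) / card (PS d n)"
  shows "card {S\<in>PS d n. GG d k n ws S - \<mu> \<ge> t} \<le> card (PS d n) * exp (- 2 * t^2 / n)"
proof -
  define l where "l = 4 * t / n"
  have l: "l > 0" using n t by (simp add: l_def)
  have mgf: "(\<Sum>S\<in>PS d n. exp (l * (GG d k n ws S - \<mu>))) \<le> card (PS d n) * exp (l^2 * 1^2 * card {..<n} / 8)"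
    unfolding \<mu>_def PS_def
    by (rule mcdiarmid_mgf[OF _ cube_finite cube_ne _ l]) (use GG_bd in \<open>auto simp: PS_def\<close>)
  have "card {S\<in>PS d n. GG d k n ws S - \<mu> \<ge> t} * exp (l * t) \<le> card (PS d n) * exp (l^2 * 1^2 * card {..<n} / 8)"
    by (rule chernoff_count[OF PS_finite l mgf])
  then have "card {S\<in>PS d n. GG d k n ws S - \<mu> \<ge> t} \<le> card (PS d n) * exp (l^2 * card {..<n} / 8) / exp (l * t)"
    by (simp add: pos_le_divide_eq)
  also have "\<dots> = card (PS d n) * exp (l^2 * n / 8 - l * t)"
    by (simp add: exp_diff)
  also have "l^2 * n / 8 - l * t = - 2 * t^2 / n"
    using n by (simp add: l_def power2_eq_square field_simps)
  finally show ?thesis .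
qed



lemma odd_sum_pm1:
  fixes t :: "'a \<Rightarrow> real"
  assumes "finite J" "\<And>i. i \<in> J \<Longrightarrow> t i = -1 \<or> t i = 1"
  shows "\<exists>m::int. (\<Sum>i\<in>J. t i) = of_int m \<and> (odd m \<longleftrightarrow> odd (card J))"
  using assms
proof (induction J rule: finite_induct)
  case empty
  then show ?case by (intro exI[of _ 0]) simp
next
  case (insert x F)
  obtain m where m: "(\<Sum>i\<in>F. t i) = of_int m" "odd m \<longleftrightarrow> odd (card F)"
    using insert by auto
  have tx: "t x = -1 \<or> t x = 1" using insert(4) by simp
  show ?case
  proof (cases "t x = 1")
    case True
    show ?thesis
      by (intro exI[of _ "m + 1"]) (use insert(1,2) m True in simp)
  next
    case False
    then have "t x = -1" using tx by simp
    then show ?thesis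
      by (intro exI[of _ "m - 1"]) (use insert(1,2) m in simp)
  qed
qed

lemma ip_ws_abs:
  assumes k: "odd k" "k \<le> d" and ws1: "\<forall>i<k. ws i \<in> {-1, 1}" and ws0: "\<forall>i\<ge>k. ws i = 0"
    and x: "x \<in> cube d"
  shows "\<bar>ip d ws x\<bar> \<ge> 1"
proof -
  have "ip d ws x = (\<Sum>i\<in>{..<k}. ws i * x i)"
    unfolding ip_def using k(2) ws0
    by (intro sum.mono_neutral_right) auto
  moreover have "\<exists>m::int. (\<Sum>i\<in>{..<k}. ws i * x i) = of_int m \<and> (odd m \<longleftrightarrow> odd (card {..<k}))"
  proof (rule odd_sum_pm1)
    fix i assume i: "i \<in> {..<k}"
    then have "ws i = -1 \<or> ws i = 1" using ws1 by auto
    moreover have "x i = -1 \<or> x i = 1" using x i k(2) by (auto simp: cube_def)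
    ultimately show "ws i * x i = -1 \<or> ws i * x i = 1" by auto
  qed simp
  then obtain m :: int where m: "(\<Sum>i\<in>{..<k}. ws i * x i) = of_int m" "odd m"
    using k(1) by auto
  have "m \<noteq> 0" using m(2) by auto
  then have "\<bar>m\<bar> \<ge> 1" by linarith
  then have "\<bar>real_of_int m\<bar> \<ge> 1" by (metis of_int_1_le_iff of_int_abs)
  ultimately show ?thesis using m(1) by simp
qed

lemma norm2_ws:
  assumes "k \<le> d" "\<forall>i<k. ws i \<in> {-1, 1}" "\<forall>i\<ge>k. ws i = 0"
  shows "norm2 d ws = sqrt (real k)"
proof -
  have "(\<Sum>i<d. (ws i)^2) = (\<Sum>i<k. (ws i)^2)"
    using assms by (intro sum.mono_neutral_right) auto
  also have "\<dots> = (\<Sum>i<k. 1)"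
    using assms(2) by (intro sum.cong) auto
  finally show ?thesis unfolding norm2_def by simp
qed



lemma err_le_GG:
  assumes k: "odd k" "k \<le> d" and ws1: "\<forall>i<k. ws i \<in> {-1, 1}" and ws0: "\<forall>i\<ge>k. ws i = 0"
    and n: "n \<ge> 1" and S: "S \<in> PS d n" and mm: "max_margin d n ws S w"
  shows "real n * test_err d ws w \<le> GG d k n ws S"
proof -
  define nw where "nw = norm2 d w"
  have nw: "nw > 0" using mm unfolding max_margin_def nw_def norm2_def
    by (metis real_sqrt_ge_zero sum_nonneg zero_le_power2 order_neq_le_trans)
  define u where "u j = w j / nw" for j
  have nw2: "nw^2 = (\<Sum>j<d. (w j)^2)" unfolding nw_def norm2_def by (simp add: sum_nonneg)
  have u1: "norm2 d u = 1"
  proof -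
    have "(\<Sum>j<d. (u j)^2) = (\<Sum>j<d. (w j)^2) / nw^2"
      unfolding u_def by (simp add: power_divide sum_divide_distrib)
    also have "\<dots> = 1" using nw nw2 by (metis divide_self power_not_zero less_irrefl)
    finally show ?thesis unfolding norm2_def by simp
  qed
  have uW: "u \<in> Wb d" using u1 by (simp add: Wb_def)
  have ipu: "ip d u x = ip d w x / nw" for x
    unfolding ip_def u_def by (simp add: sum_divide_distrib)
  have k1: "k \<ge> 1" using k(1) by (cases k) auto
  have sk: "sqrt (real k) > 0" using k1 by simp
  have nws: "norm2 d ws = sqrt (real k)" by (rule norm2_ws[OF k(2) ws1 ws0])
  have Sc: "S i \<in> cube d" if "i < n" for i using S that by (auto simp: PS_def PiE_dflt_def)
  have fin: "finite {..<n}" "{..<n} \<noteq> {}" using n by (auto simp: lessThan_empty_iff)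
  have m_ws: "margin2 d n ws S ws \<ge> 1 / sqrt (real k)"
    unfolding margin2_def
  proof (rule Min.boundedI)
    fix a assume "a \<in> (\<lambda>i. ystar d ws (S i) * ip d ws (S i) / norm2 d ws) ` {..<n}"
    then obtain i where i: "i < n" and a: "a = ystar d ws (S i) * ip d ws (S i) / norm2 d ws" by auto
    have "ystar d ws (S i) * ip d ws (S i) = \<bar>ip d ws (S i)\<bar>"
      unfolding ystar_def by (simp add: sgn_mult_self_eq abs_sgn mult.commute)
    then have "ystar d ws (S i) * ip d ws (S i) \<ge> 1" using ip_ws_abs[OF k ws1 ws0 Sc[OF i]] by simp
    then show "1 / sqrt (real k) \<le> a"
      unfolding a nws using sk by (simp add: divide_right_mono)
  qed (use fin in auto)
  have m_w: "margin2 d n ws S ws \<le> margin2 d n ws S w"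
    using mm nws sk unfolding max_margin_def by simp
  have hz: "hh d k ws u (S i) = 0" if i: "i < n" for i
  proof -
    have "margin2 d n ws S w \<le> ystar d ws (S i) * ip d w (S i) / norm2 d w"
      unfolding margin2_def using fin i by (intro Min_le) auto
    then have "1 / sqrt (real k) \<le> ystar d ws (S i) * ip d u (S i)"
      using m_ws m_w by (simp add: ipu nw_def)
    then have "1 \<le> sqrt (real k) * (ystar d ws (S i) * ip d u (S i))"
      using sk by (simp add: field_simps)
    then show ?thesis unfolding hh_def by (rule phi_large)
  qed
  have bK: "bnd (Wb d) (\<lambda>w. (\<Sum>T\<in>PS d n. \<Sum>j\<in>{..<n}. hh d k ws w (T j)) / real (card (PS d n)) - (\<Sum>j\<in>{..<n}. hh d k ws w (S j)))"
    by (intro bnd_diff bnd_div bnd_sum bnd_hh) (auto simp: PS_finite)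
  have "(\<Sum>T\<in>PS d n. \<Sum>j\<in>{..<n}. hh d k ws u (T j)) / real (card (PS d n)) - (\<Sum>j\<in>{..<n}. hh d k ws u (S j)) \<le> GG d k n ws S"
    unfolding GG_def by (rule cSUP_upper[OF uW bnd_bdd_above[OF bK]])
  moreover have "(\<Sum>j\<in>{..<n}. hh d k ws u (S j)) = 0" using hz by simp
  moreover have "(\<Sum>T\<in>PS d n. \<Sum>j\<in>{..<n}. hh d k ws u (T j)) / real (card (PS d n))
      = real n * ((\<Sum>x\<in>cube d. hh d k ws u x) / card (cube d))"
  proof -
    have cC: "card (cube d) > 0" using cube_finite cube_ne by (simp add: card_gt_0_iff)
    have cP: "card (PS d n) > 0" using PS_finite PS_ne by (simp add: card_gt_0_iff)
    have "(\<Sum>T\<in>PS d n. hh d k ws u (T j)) = card (PS d n) * (\<Sum>x\<in>cube d. hh d k ws u x) / card (cube d)"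
      if j: "j < n" for j
      using marginal[of "{..<n}" j "cube d" "hh d k ws u" "\<lambda>_. 0"] j cube_finite cC cube_ne
      unfolding PS_def by (simp add: eq_divide_eq algebra_simps)
    then have "(\<Sum>T\<in>PS d n. \<Sum>j\<in>{..<n}. hh d k ws u (T j)) = (\<Sum>j\<in>{..<n}. card (PS d n) * (\<Sum>x\<in>cube d. hh d k ws u x) / card (cube d))"
      by (subst sum.swap) (intro sum.cong refl, simp)
    also have "\<dots> = real n * (card (PS d n) * (\<Sum>x\<in>cube d. hh d k ws u x) / card (cube d))" by simp
    finally show ?thesis using cP by simp
  qed
  moreover have "test_err d ws w \<le> (\<Sum>x\<in>cube d. hh d k ws u x) / card (cube d)"
  proof -
    let ?E = "{x. ystar d ws x * ip d w x \<le> 0}"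
    have "test_err d ws w = card (cube d \<inter> ?E) / card (cube d)"
      unfolding test_err_def DX_def using cube_finite cube_ne by (simp add: measure_pmf_of_set)
    also have "card (cube d \<inter> ?E) = (\<Sum>x\<in>cube d \<inter> ?E. hh d k ws u x)"
    proof -
      have "(\<Sum>x\<in>cube d \<inter> ?E. hh d k ws u x) = (\<Sum>x\<in>cube d \<inter> ?E. 1)"
      proof (intro sum.cong refl)
        fix x assume "x \<in> cube d \<inter> ?E"
        then have "ystar d ws x * ip d w x \<le> 0" by simp
        then have "ystar d ws x * ip d u x \<le> 0" using nw by (simp add: ipu divide_nonpos_pos)
        then show "hh d k ws u x = 1" unfolding hh_def by (rule phi_nonpos)
      qed
      then show ?thesis by simp
    qed
    also have "(\<Sum>x\<in>cube d \<inter> ?E. hh d k ws u x) \<le> (\<Sum>x\<in>cube d. hh d k ws u x)"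
      using cube_finite by (intro sum_mono2) (auto simp: hh_def phi_range)
    finally show ?thesis by (simp add: divide_right_mono)
  qed
  ultimately show ?thesis using n by (smt (verit) mult_left_mono of_nat_0_le_iff)
qed



theorem theoremE4:
  fixes d k n :: nat and \<delta> :: real and ws :: "nat \<Rightarrow> real"
  assumes "odd k" and "k \<le> d" and "n \<ge> 1"
    and "0 < \<delta>" and "\<delta> < 1"
    and "\<forall>i<k. ws i \<in> {-1, 1}" and "\<forall>i\<ge>k. ws i = 0"
  shows "measure_pmf.prob (sample d n)
           {S. \<forall>w. max_margin d n ws S w \<longrightarrow>
                 test_err d ws w \<le> 4 * sqrt (real k * real d / real n)
                                    + 3 * sqrt (ln (2 / \<delta>) / (2 * real n))}
         \<ge> 1 - \<delta>"
proof -
  note k = assms(1,2) and n = assms(3) and ws1 = assms(6) and ws0 = assms(7)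
  define Tgt where "Tgt = 4 * sqrt (real k * real d / real n) + 3 * sqrt (ln (2 / \<delta>) / (2 * real n))"
  define \<epsilon> where "\<epsilon> = sqrt (ln (1 / \<delta>) / (2 * real n))"
  define t where "t = real n * \<epsilon>"
  define \<mu> where "\<mu> = (\<Sum>T\<in>PS d n. GG d k n ws T) / card (PS d n)"
  have npos: "real n > 0" using n by simp
  have lnpos: "ln (1 / \<delta>) > 0" using assms(4,5) by simp
  have eps: "\<epsilon> > 0" unfolding \<epsilon>_def using lnpos npos by simp
  have tpos: "t > 0" unfolding t_def using eps npos by simp
  have cP: "card (PS d n) > 0" using PS_finite PS_ne by (simp add: card_gt_0_iff)
  define Bad where "Bad = {S\<in>PS d n. GG d k n ws S - \<mu> \<ge> t}"
  define Good where "Good = {S\<in>PS d n. GG d k n ws S - \<mu> < t}"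
  have bad: "card Bad \<le> card (PS d n) * \<delta>"
  proof -
    have "card Bad \<le> card (PS d n) * exp (- 2 * t^2 / n)"
      unfolding Bad_def \<mu>_def by (rule GG_tail[OF n tpos])
    also have "- 2 * t^2 / n = - ln (1 / \<delta>)"
    proof -
      have "\<epsilon>^2 = ln (1 / \<delta>) / (2 * real n)" unfolding \<epsilon>_def using lnpos npos by simp
      then have h: "real n * (2 * \<epsilon>^2) = ln (1 / \<delta>)" using npos by (simp add: field_simps)
      have "t^2 = (real n)^2 * \<epsilon>^2" unfolding t_def by (simp add: power_mult_distrib)
      then have "- 2 * t^2 / n = - (real n * (2 * \<epsilon>^2))" using npos by (simp add: power2_eq_square field_simps)
      then show ?thesis using h by simp
    qed
    also have "exp (- ln (1 / \<delta>)) = \<delta>" using assms(4) by (simp add: ln_div)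
    finally show ?thesis .
  qed
  have part: "PS d n = Good \<union> Bad" "Good \<inter> Bad = {}" unfolding Good_def Bad_def by auto
  have cGood: "real (card Good) \<ge> card (PS d n) * (1 - \<delta>)"
  proof -
    have "card (PS d n) = card Good + card Bad"
      using part PS_finite by (metis card_Un_disjoint finite_Un)
    then show ?thesis using bad by (simp add: algebra_simps)
  qed
  have mu: "\<mu> \<le> 2 * (sqrt (real k) * sqrt (real n * real d))"
    unfolding \<mu>_def using EG_bound[of d k n ws] cP by (simp add: pos_divide_le_eq mult.commute)
  have sub: "Good \<subseteq> {S. \<forall>w. max_margin d n ws S w \<longrightarrow> test_err d ws w \<le> Tgt}"
  proof (intro subsetI CollectI allI impI)
    fix S w assume S: "S \<in> Good" and mm: "max_margin d n ws S w"
    have SP: "S \<in> PS d n" and lt: "GG d k n ws S - \<mu> < t" using S by (auto simp: Good_def)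
    have "real n * test_err d ws w \<le> GG d k n ws S" by (rule err_le_GG[OF k ws1 ws0 n SP mm])
    also have "\<dots> < 2 * (sqrt (real k) * sqrt (real n * real d)) + real n * \<epsilon>" using lt mu unfolding t_def by linarith
    finally have "test_err d ws w < (2 * (sqrt (real k) * sqrt (real n * real d))) / real n + \<epsilon>"
      using npos by (simp add: field_simps)
    also have "(2 * (sqrt (real k) * sqrt (real n * real d))) / real n \<le> 4 * sqrt (real k * real d / real n)"
    proof -
      have "sqrt (real k) * sqrt (real n * real d) = sqrt (real k * real d / real n) * real n"
      proof -
        have "sqrt (real k * real d / real n) * real n = sqrt (real k * real d / real n) * sqrt (real n ^ 2)"
          by simp
        also have "\<dots> = sqrt (real k * real d / real n * real n ^ 2)" by (rule real_sqrt_mult[symmetric])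
        also have "real k * real d / real n * real n ^ 2 = real k * (real n * real d)"
          using npos by (simp add: power2_eq_square field_simps)
        finally show ?thesis by (simp add: real_sqrt_mult)
      qed
      then have "(2 * (sqrt (real k) * sqrt (real n * real d))) / real n = 2 * sqrt (real k * real d / real n)"
        using npos by simp
      then show ?thesis by simp
    qed
    also have "\<epsilon> \<le> 3 * sqrt (ln (2 / \<delta>) / (2 * real n))"
    proof -
      have "ln (1 / \<delta>) \<le> ln (2 / \<delta>)" using assms(4) by (simp add: divide_right_mono)
      then have "\<epsilon> \<le> sqrt (ln (2 / \<delta>) / (2 * real n))"
        unfolding \<epsilon>_def using npos by (simp add: divide_right_mono)
      moreover have "sqrt (ln (2 / \<delta>) / (2 * real n)) \<ge> 0"
        using lnpos \<open>ln (1 / \<delta>) \<le> ln (2 / \<delta>)\<close> npos by simp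
      ultimately show ?thesis by linarith
    qed
    finally show "test_err d ws w \<le> Tgt" unfolding Tgt_def by simp
  qed
  have "measure_pmf.prob (sample d n) {S. \<forall>w. max_margin d n ws S w \<longrightarrow> test_err d ws w \<le> Tgt}
      = card (PS d n \<inter> {S. \<forall>w. max_margin d n ws S w \<longrightarrow> test_err d ws w \<le> Tgt}) / card (PS d n)"
    unfolding sample_eq using PS_finite PS_ne by (simp add: measure_pmf_of_set)
  also have "\<dots> \<ge> card Good / card (PS d n)"
  proof -
    have "Good \<subseteq> PS d n \<inter> {S. \<forall>w. max_margin d n ws S w \<longrightarrow> test_err d ws w \<le> Tgt}"
      using sub by (auto simp: Good_def)
    then have "card Good \<le> card (PS d n \<inter> {S. \<forall>w. max_margin d n ws S w \<longrightarrow> test_err d ws w \<le> Tgt})"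
      using PS_finite by (intro card_mono) auto
    then show ?thesis using cP by (simp add: divide_right_mono)
  qed
  finally have "measure_pmf.prob (sample d n) {S. \<forall>w. max_margin d n ws S w \<longrightarrow> test_err d ws w \<le> Tgt}
      \<ge> card Good / card (PS d n)" .
  moreover have "card Good / card (PS d n) \<ge> 1 - \<delta>"
    using cGood cP by (simp add: pos_le_divide_eq mult.commute)
  ultimately show ?thesis unfolding Tgt_def by linarith
qed

end
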